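(* Let $p$ be an odd prime and $\lambda$ a nonempty self-conjugate partition. If $a^*_\lambda$ is even, then $p\mid a^*_\lambda$.
   Context: Partitions: $\lambda=(\lambda_1\ge\lambda_2\ge\cdots)$ with finitely many nonzero parts; $l(\lambda)$ = number of nonzero parts; Young diagram $[\lambda]=\{(i,j): i\ge1, 1\le j\le\lambda_i\}$ ($i$ = row, increasing downward); self-conjugate means $(i,j)\in[\lambda]\iff(j,i)\in[\lambda]$. Rim and $p$-rim: the rim is the set of nodes $(i,j)\in[\lambda]$ with $(i+1,j+1)\notin[\lambda]$. Label rim nodes $1,2,\dots$ along the rim path from $(1,\lambda_1)$ to $(l(\lambda),1)$ (top-right to bottom-left). The first $p$-segment is the rim nodes labelled $1,\dots,p$ (or all if fewer). If the last node $(i,j)$ of a $p$-segment lies in the last row, stop; otherwise with $l$ the smallest label in row $i+1$ the next $p$-segment is the rim nodes labelled $l,\dots,l+p-1$ (or up to the last). The $p$-rim is the union of the $p$-segments. $p$-rim*: $U_\lambda=\{(i,j)\in p\text{-rim of }\lambda: i\le j\}$, $L_\lambda=\{(j,i):(i,j)\in U_\lambda\}$, $\mathrm{Rim}^*_p(\lambda)=U_\lambda\cup L_\lambda$, and $a^*_\lambda=\#\mathrm{Rim}^*_p(\lambda)$. *)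

theory Defs
  imports "HOL-Computational_Algebra.Primes"
begin

text \<open>A partition is a weakly decreasing list of positive naturals (its nonzero parts).
  Parts are indexed from 1: lambda_i = lam ! (i - 1); l(lambda) = length lam.\<close>

definition is_partition :: "nat list \<Rightarrow> bool" where
  "is_partition lam \<longleftrightarrow> sorted_wrt (\<ge>) lam \<and> 0 \<notin> set lam"

definition young :: "nat list \<Rightarrow> (nat \<times> nat) set" where
  "young lam = {(i, j). 1 \<le> i \<and> i \<le> length lam \<and> 1 \<le> j \<and> j \<le> lam ! (i - 1)}"

definition self_conjugate :: "nat list \<Rightarrow> bool" where
  "self_conjugate lam \<longleftrightarrow> (\<forall>i j. (i, j) \<in> young lam \<longleftrightarrow> (j, i) \<in> young lam)"

definition rim :: "nat list \<Rightarrow> (nat \<times> nat) set" where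
  "rim lam = {(i, j) \<in> young lam. (i + 1, j + 1) \<notin> young lam}"

text \<open>Label of a rim node along the rim path from (1, lambda_1) to (l, 1):
  rows increase, and within a row columns decrease; labels start at 1.\<close>

definition rim_label :: "nat list \<Rightarrow> nat \<times> nat \<Rightarrow> nat" where
  "rim_label lam x = card {y \<in> rim lam. fst y < fst x \<or> (fst y = fst x \<and> snd x \<le> snd y)}"

inductive_set seg_start :: "nat \<Rightarrow> nat list \<Rightarrow> nat set" for p lam where
  first: "1 \<in> seg_start p lam"
| step: "\<lbrakk> s \<in> seg_start p lam; x \<in> rim lam;
           rim_label lam x = min (s + p - 1) (card (rim lam));
           fst x < length lam \<rbrakk>
         \<Longrightarrow> Min (rim_label lam ` {z \<in> rim lam. fst z = fst x + 1}) \<in> seg_start p lam"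

definition p_rim :: "nat \<Rightarrow> nat list \<Rightarrow> (nat \<times> nat) set" where
  "p_rim p lam = {x \<in> rim lam. \<exists>s \<in> seg_start p lam.
                    s \<le> rim_label lam x \<and> rim_label lam x \<le> s + p - 1}"

definition rim_star_U :: "nat \<Rightarrow> nat list \<Rightarrow> (nat \<times> nat) set" where
  "rim_star_U p lam = {(i, j) \<in> p_rim p lam. i \<le> j}"

definition rim_star :: "nat \<Rightarrow> nat list \<Rightarrow> (nat \<times> nat) set" where
  "rim_star p lam = rim_star_U p lam \<union> (\<lambda>(i, j). (j, i)) ` rim_star_U p lam"

definition a_star :: "nat \<Rightarrow> nat list \<Rightarrow> nat" where
  "a_star p lam = card (rim_star p lam)"

end

theory Submission imports Defs begin

lemma young_finite: "finite (young lam)"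
proof -
  have "young lam \<subseteq> {..length lam} \<times> {..sum_list lam}"
    by (auto simp: young_def intro: order_trans[OF _ elem_le_sum_list])
  then show ?thesis by (rule finite_subset) auto
qed

lemma rim_finite: "finite (rim lam)"
  using young_finite by (rule finite_subset[rotated]) (auto simp: rim_def)

lemma young_down:
  assumes "is_partition lam" "(i, j) \<in> young lam" "1 \<le> i'" "i' \<le> i" "1 \<le> j'" "j' \<le> j"
  shows "(i', j') \<in> young lam"
proof -
  have s: "\<And>a b. a < b \<Longrightarrow> b < length lam \<Longrightarrow> lam ! b \<le> lam ! a"
    using assms(1) unfolding is_partition_def sorted_wrt_iff_nth_less by auto
  have "lam ! (i - 1) \<le> lam ! (i' - 1)"
    using s[of "i' - 1" "i - 1"] assms by (cases "i' = i") (auto simp: young_def)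
  then show ?thesis using assms by (auto simp: young_def)
qed

definition prec :: "nat \<times> nat \<Rightarrow> nat \<times> nat \<Rightarrow> bool" where
  "prec x y \<longleftrightarrow> fst x < fst y \<or> (fst x = fst y \<and> snd y < snd x)"

lemma lab_mono:
  assumes "x \<in> rim lam" "y \<in> rim lam" "prec x y"
  shows "rim_label lam x < rim_label lam y"
  unfolding rim_label_def
proof (rule psubset_card_mono)
  show "finite {z \<in> rim lam. fst z < fst y \<or> fst z = fst y \<and> snd y \<le> snd z}"
    using rim_finite by auto
  show "{z \<in> rim lam. fst z < fst x \<or> fst z = fst x \<and> snd x \<le> snd z}
      \<subset> {z \<in> rim lam. fst z < fst y \<or> fst z = fst y \<and> snd y \<le> snd z}"
    using assms unfolding prec_def by auto
qed

lemma lab_ge1: "x \<in> rim lam \<Longrightarrow> 1 \<le> rim_label lam x"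
  unfolding rim_label_def One_nat_def Suc_le_eq card_gt_0_iff using rim_finite[of lam] by (cases x) auto

lemma lab_le: "rim_label lam x \<le> card (rim lam)"
  unfolding rim_label_def using rim_finite by (intro card_mono) auto

lemma lab_inj: "inj_on (rim_label lam) (rim lam)"
proof (rule inj_onI)
  fix x y assume xy: "x \<in> rim lam" "y \<in> rim lam" "rim_label lam x = rim_label lam y"
  show "x = y"
  proof (rule ccontr)
    assume "x \<noteq> y"
    then have "prec x y \<or> prec y x" unfolding prec_def by (auto simp: prod_eq_iff)
    then show False using lab_mono[of x lam y] lab_mono[of y lam x] xy by auto
  qed
qed

lemma lab_image: "rim_label lam ` rim lam = {1..card (rim lam)}"
proof (rule card_subset_eq)
  show "finite {1..card (rim lam)}" by simp
  show "rim_label lam ` rim lam \<subseteq> {1..card (rim lam)}" using lab_ge1 lab_le by auto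
  show "card (rim_label lam ` rim lam) = card {1..card (rim lam)}"
    using card_image[OF lab_inj] by simp
qed

lemma row_succ:
  assumes "is_partition lam" "x \<in> rim lam" "fst x < length lam"
  shows "(fst x + 1, lam ! fst x) \<in> rim lam"
proof -
  have p: "0 \<notin> set lam" and s: "\<And>a b. a < b \<Longrightarrow> b < length lam \<Longrightarrow> lam ! b \<le> lam ! a"
    using assms(1) unfolding is_partition_def sorted_wrt_iff_nth_less by auto
  have "lam ! fst x \<noteq> 0" using p nth_mem[OF assms(3)] by metis
  moreover have "fst x \<ge> 1" using assms(2) by (auto simp: rim_def young_def)
  moreover have "fst x + 1 < length lam \<Longrightarrow> lam ! (fst x + 1) \<le> lam ! fst x" using s by auto
  ultimately have A: "(fst x + 1, lam ! fst x) \<in> young lam"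
    and B: "(fst x + 1 + 1, lam ! fst x + 1) \<notin> young lam"
    using assms(3) unfolding young_def by auto
  show ?thesis unfolding rim_def using A B by simp
qed


definition nxt :: "nat \<Rightarrow> nat list \<Rightarrow> nat \<Rightarrow> nat" where
  "nxt p lam s = (if \<exists>x\<in>rim lam. rim_label lam x = min (s + p - 1) (card (rim lam)) \<and> fst x < length lam
     then Min (rim_label lam ` {z \<in> rim lam. fst z = fst (SOME x. x \<in> rim lam \<and>
        rim_label lam x = min (s + p - 1) (card (rim lam)) \<and> fst x < length lam) + 1})
     else s + p)"

lemma nxt_ge:
  assumes "is_partition lam" "1 \<le> p"
  shows "s + p \<le> nxt p lam s"
proof (cases "\<exists>x\<in>rim lam. rim_label lam x = min (s + p - 1) (card (rim lam)) \<and> fst x < length lam")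
  case True
  define x where "x = (SOME x. x \<in> rim lam \<and>
        rim_label lam x = min (s + p - 1) (card (rim lam)) \<and> fst x < length lam)"
  have x: "x \<in> rim lam" "rim_label lam x = min (s + p - 1) (card (rim lam))" "fst x < length lam"
    using someI_ex[OF True[unfolded Bex_def]] unfolding x_def by auto
  define L where "L = rim_label lam ` {z \<in> rim lam. fst z = fst x + 1}"
  have "nxt p lam s = Min L" using True unfolding nxt_def L_def x_def by simp
  moreover have "L \<noteq> {}" using row_succ[OF assms(1) x(1) x(3)] unfolding L_def by auto
  moreover have "finite L" unfolding L_def using rim_finite by auto
  ultimately have "nxt p lam s \<in> L" using Min_in by auto
  then obtain z where z: "z \<in> rim lam" "fst z = fst x + 1" "nxt p lam s = rim_label lam z"
    unfolding L_def by auto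
  have "rim_label lam x < rim_label lam z" using lab_mono[OF x(1) z(1)] z(2) by (auto simp: prec_def)
  moreover have "rim_label lam z \<le> card (rim lam)" by (rule lab_le)
  ultimately show ?thesis using x(2) z(3) assms(2) by linarith
next
  case False
  then show ?thesis unfolding nxt_def if_not_P[OF False] by simp
qed

lemma seg_it:
  assumes "s \<in> seg_start p lam"
  shows "\<exists>n. s = (nxt p lam ^^ n) 1"
  using assms
proof induction
  case first
  then show ?case by (rule exI[of _ 0]) simp
next
  case (step s x)
  then obtain n where n: "s = (nxt p lam ^^ n) 1" by auto
  have E: "\<exists>x\<in>rim lam. rim_label lam x = min (s + p - 1) (card (rim lam)) \<and> fst x < length lam"
    using step by auto
  define y where "y = (SOME x. x \<in> rim lam \<and>
        rim_label lam x = min (s + p - 1) (card (rim lam)) \<and> fst x < length lam)"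
  have y: "y \<in> rim lam" "rim_label lam y = min (s + p - 1) (card (rim lam))"
    using someI_ex[OF E[unfolded Bex_def]] unfolding y_def by auto
  have "y = x" using lab_inj[of lam] y step(2,3) unfolding inj_on_def by auto
  then have "nxt p lam s = Min (rim_label lam ` {z \<in> rim lam. fst z = fst x + 1})"
    using E unfolding nxt_def y_def by simp
  then show ?case using n by (intro exI[of _ "Suc n"]) simp
qed

lemma it_gap:
  assumes "is_partition lam" "1 \<le> p" "m < n"
  shows "(nxt p lam ^^ m) 1 + p \<le> (nxt p lam ^^ n) 1"
  using assms(3)
proof (induction n)
  case 0 then show ?case by simp
next
  case (Suc n)
  have "(nxt p lam ^^ n) 1 + p \<le> (nxt p lam ^^ Suc n) 1" using nxt_ge[OF assms(1,2)] by simp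
  moreover have "(nxt p lam ^^ m) 1 \<le> (nxt p lam ^^ n) 1" using Suc by (cases "m = n") auto
  ultimately show ?case by linarith
qed

lemma seg_gap:
  assumes "is_partition lam" "1 \<le> p" "a \<in> seg_start p lam" "b \<in> seg_start p lam" "a < b"
  shows "a + p \<le> b"
proof -
  obtain m n where mn: "a = (nxt p lam ^^ m) 1" "b = (nxt p lam ^^ n) 1"
    using seg_it assms(3,4) by metis
  have "m < n"
  proof (rule ccontr)
    assume "\<not> m < n"
    then have "n = m \<or> n < m" by auto
    then show False using it_gap[OF assms(1,2), of n m] mn assms(5) by auto
  qed
  then show ?thesis using it_gap[OF assms(1,2)] mn by auto
qed

lemma seg_ge1:
  assumes "is_partition lam" "1 \<le> p" "a \<in> seg_start p lam"
  shows "1 \<le> a"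
proof -
  obtain m where "a = (nxt p lam ^^ m) 1" using seg_it assms(3) by metis
  then show ?thesis using it_gap[OF assms(1,2), of 0 m] by (cases m) auto
qed


definition dg :: "nat list \<Rightarrow> nat" where
  "dg lam = Max {i. (i, i) \<in> young lam}"

lemma dg_props:
  assumes "is_partition lam" "lam \<noteq> []"
  shows "(dg lam, dg lam) \<in> young lam" "\<And>i. (i, i) \<in> young lam \<Longrightarrow> i \<le> dg lam"
    "(dg lam, dg lam) \<in> rim lam"
proof -
  have fin: "finite {i. (i, i) \<in> young lam}"
    by (rule finite_subset[of _ "{..length lam}"]) (auto simp: young_def)
  have "lam ! 0 \<noteq> 0" using assms unfolding is_partition_def
    by (metis length_greater_0_conv nth_mem)
  then have "(1, 1) \<in> young lam" using assms(2) by (auto simp: young_def Suc_le_eq)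
  then have ne: "{i. (i, i) \<in> young lam} \<noteq> {}" by auto
  show A: "(dg lam, dg lam) \<in> young lam" using Max_in[OF fin ne] unfolding dg_def by simp
  show B: "\<And>i. (i, i) \<in> young lam \<Longrightarrow> i \<le> dg lam" using Max_ge[OF fin] unfolding dg_def by simp
  show "(dg lam, dg lam) \<in> rim lam" using A B[of "dg lam + 1"] by (auto simp: rim_def)
qed

lemma diag_unique:
  assumes "is_partition lam" "lam \<noteq> []" "x \<in> rim lam" "fst x = snd x"
  shows "x = (dg lam, dg lam)"
proof -
  obtain i where x: "x = (i, i)" using assms(4) by (metis prod.collapse)
  have iy: "(i, i) \<in> young lam" "(i + 1, i + 1) \<notin> young lam" using assms(3) x by (auto simp: rim_def)
  have "i \<le> dg lam" using dg_props(2)[OF assms(1,2) iy(1)] .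
  moreover have "\<not> i < dg lam"
    using young_down[OF assms(1) dg_props(1)[OF assms(1,2)], of "i+1" "i+1"] iy by auto
  ultimately show ?thesis using x by auto
qed

lemma upper_prec:
  assumes "is_partition lam" "lam \<noteq> []" "x \<in> rim lam" "fst x < snd x"
  shows "prec x (dg lam, dg lam)"
proof -
  obtain i j where x: "x = (i, j)" by (metis prod.collapse)
  have iy: "(i, j) \<in> young lam" "1 \<le> i" using assms(3) x by (auto simp: rim_def young_def)
  have "(i, i) \<in> young lam" using young_down[OF assms(1) iy(1), of i i] iy assms(4) x by auto
  then have "i \<le> dg lam" using dg_props(2)[OF assms(1,2)] by auto
  then show ?thesis using x assms(4) by (auto simp: prec_def)
qed

lemma lower_prec:
  assumes "is_partition lam" "lam \<noteq> []" "x \<in> rim lam" "snd x < fst x"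
  shows "prec (dg lam, dg lam) x"
proof -
  obtain i j where x: "x = (i, j)" by (metis prod.collapse)
  have iy: "(i + 1, j + 1) \<notin> young lam" "1 \<le> j" using assms(3) x by (auto simp: rim_def young_def)
  have "\<not> i < dg lam"
    using young_down[OF assms(1) dg_props(1)[OF assms(1,2)], of "i+1" "j+1"] iy assms(4) x by auto
  then show ?thesis using x assms(4) by (auto simp: prec_def)
qed


theorem lemma3p10:
  fixes p :: nat and lam :: "nat list"
  assumes "prime p" and "odd p"
    and "is_partition lam" and "lam \<noteq> []" and "self_conjugate lam"
    and "even (a_star p lam)"
  shows "p dvd a_star p lam"
proof -
  note part = assms(3) and ne = assms(4)
  have p1: "1 \<le> p" using assms(1) prime_ge_1_nat by blast
  define R where "R = rim lam"
  define S where "S = seg_start p lam"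
  define lab where "lab = rim_label lam"
  define N where "N = card R"
  define c where "c = (dg lam, dg lam)"
  define \<delta> where "\<delta> = lab c"
  define PR where "PR = p_rim p lam"
  define W where "W = {x \<in> PR. fst x < snd x}"
  define sw :: "nat \<times> nat \<Rightarrow> nat \<times> nat" where "sw = (\<lambda>(i, j). (j, i))"
  have cR: "c \<in> R" unfolding c_def R_def using dg_props(3)[OF part ne] .
  have PRR: "PR \<subseteq> R" unfolding PR_def R_def p_rim_def by auto
  have finR: "finite R" unfolding R_def by (rule rim_finite)
  have finW: "finite W" using finite_subset[OF _ finR] PRR unfolding W_def by auto
  have hU: "rim_star_U p lam = W \<union> (PR \<inter> {c})"
  proof -
    have "\<And>x. x \<in> PR \<Longrightarrow> fst x = snd x \<Longrightarrow> x = c"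
      using diag_unique[OF part ne] PRR unfolding c_def R_def by auto
    then show ?thesis unfolding rim_star_U_def W_def c_def PR_def
      by (auto simp: le_less)
  qed
  have rs: "rim_star p lam = W \<union> sw ` W \<union> (PR \<inter> {c})"
    unfolding rim_star_def hU sw_def c_def by auto
  have injsw: "inj_on sw W" unfolding sw_def inj_on_def by auto
  have disj: "W \<inter> sw ` W = {}" unfolding W_def sw_def by auto
  have cW: "c \<notin> W \<union> sw ` W" unfolding W_def sw_def c_def by auto
  have card2: "card (W \<union> sw ` W) = 2 * card W"
    using card_Un_disjoint[OF finW finite_imageI[OF finW] disj] card_image[OF injsw] by simp
  have cPR: "c \<notin> PR"
  proof
    assume "c \<in> PR"
    then have "rim_star p lam = insert c (W \<union> sw ` W)" using rs by auto
    then have "a_star p lam = Suc (2 * card W)"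
      unfolding a_star_def using cW card2 finW by simp
    then show False using assms(6) by simp
  qed
  have astar: "a_star p lam = 2 * card W"
    unfolding a_star_def rs using cPR card2 by simp
  have cnot: "\<not> (\<exists>s\<in>S. s \<le> \<delta> \<and> \<delta> \<le> s + p - 1)"
    using cPR cR unfolding PR_def p_rim_def S_def \<delta>_def lab_def R_def by auto
  have hW: "W = {x \<in> R. lab x < \<delta> \<and> (\<exists>s\<in>S. s \<le> lab x \<and> lab x \<le> s + p - 1)}"
  proof (intro equalityI subsetI)
    fix x assume "x \<in> W"
    then have x: "x \<in> PR" "fst x < snd x" unfolding W_def by auto
    have "lab x < \<delta>" using lab_mono[OF _ _ upper_prec[OF part ne _ x(2)]] x PRR dg_props(3)[OF part ne]
      unfolding lab_def \<delta>_def c_def R_def by auto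
    then show "x \<in> {x \<in> R. lab x < \<delta> \<and> (\<exists>s\<in>S. s \<le> lab x \<and> lab x \<le> s + p - 1)}"
      using x unfolding PR_def p_rim_def lab_def S_def R_def by auto
  next
    fix x assume "x \<in> {x \<in> R. lab x < \<delta> \<and> (\<exists>s\<in>S. s \<le> lab x \<and> lab x \<le> s + p - 1)}"
    then have x: "x \<in> R" "lab x < \<delta>" "\<exists>s\<in>S. s \<le> lab x \<and> lab x \<le> s + p - 1" by auto
    have "fst x \<noteq> snd x"
      using diag_unique[OF part ne, of x] x unfolding R_def \<delta>_def c_def by auto
    moreover have "\<not> snd x < fst x"
      using lab_mono[OF _ _ lower_prec[OF part ne, of x]] x dg_props(3)[OF part ne]
      unfolding R_def \<delta>_def c_def lab_def by fastforce
    ultimately have "fst x < snd x" by auto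
    then show "x \<in> W" using x unfolding W_def PR_def p_rim_def R_def lab_def S_def by auto
  qed
  have injW: "inj_on lab W" unfolding lab_def
    by (rule inj_on_subset[OF lab_inj]) (use PRR in \<open>auto simp: W_def R_def\<close>)
  define K where "K = {k \<in> {1..N}. k < \<delta> \<and> (\<exists>s\<in>S. s \<le> k \<and> k \<le> s + p - 1)}"
  have imW: "lab ` W = K"
  proof -
    have "lab ` W = {k \<in> lab ` R. k < \<delta> \<and> (\<exists>s\<in>S. s \<le> k \<and> k \<le> s + p - 1)}"
      unfolding hW by auto
    then show ?thesis unfolding K_def N_def lab_def R_def lab_image by simp
  qed
  define I where "I = S \<inter> {..<\<delta>}"
  have \<delta>N: "\<delta> \<le> N" unfolding \<delta>_def N_def lab_def R_def by (rule lab_le)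
  have hK: "K = (\<Union>s\<in>I. {s..s + p - 1})"
  proof (intro equalityI subsetI)
    fix k assume "k \<in> K"
    then show "k \<in> (\<Union>s\<in>I. {s..s + p - 1})" unfolding K_def I_def by auto
  next
    fix k assume "k \<in> (\<Union>s\<in>I. {s..s + p - 1})"
    then obtain s where s: "s \<in> S" "s < \<delta>" "s \<le> k" "k \<le> s + p - 1" unfolding I_def by auto
    have "s + p - 1 < \<delta>" using cnot s by force
    moreover have "1 \<le> s" using seg_ge1[OF part p1] s(1) unfolding S_def by auto
    ultimately show "k \<in> K" unfolding K_def using s \<delta>N by auto
  qed
  have finI: "finite I" unfolding I_def by auto
  have cardK: "card K = (\<Sum>s\<in>I. card {s..s + p - 1})"
    unfolding hK
  proof (rule card_UN_disjoint[OF finI])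
    show "\<forall>i\<in>I. finite {i..i + p - 1}" by auto
    show "\<forall>i\<in>I. \<forall>j\<in>I. i \<noteq> j \<longrightarrow> {i..i + p - 1} \<inter> {j..j + p - 1} = {}"
    proof (intro ballI impI)
      fix i j assume ij: "i \<in> I" "j \<in> I" "i \<noteq> j"
      then have "i < j \<or> j < i" by auto
      moreover have g: "i < j \<Longrightarrow> i + p \<le> j" "j < i \<Longrightarrow> j + p \<le> i"
        using seg_gap[OF part p1, of i j] seg_gap[OF part p1, of j i] ij
        unfolding I_def S_def by auto
      ultimately show "{i..i + p - 1} \<inter> {j..j + p - 1} = {}"
        using p1 by (auto simp: disjoint_iff)
    qed
  qed
  also have "\<dots> = (\<Sum>s\<in>I. p)" using p1 by (intro sum.cong) auto
  finally have "card K = p * card I" by simp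
  then have "card W = p * card I" using card_image[OF injW] imW by simp
  then show ?thesis using astar by simp
qed

end
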